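(* Assume the setup below, with $t_{\min}$ known, $D\subset B_R$ and $|x|=R$. (i) For every $y\in A_D^{(x)}$ there exists $\epsilon_0>0$ such that $\tilde\phi^{(x)}_{y,\eta,\epsilon}\in\mathrm{Range}(\tilde L_D^{(x)})$ for all $\epsilon\in(0,\epsilon_0)$ and all $\eta\in(t_{\min},t_{\max}]$. (ii) Let $\eta\in(t_{\min},t_{\max}]$. If $y\notin\overline{A_{D,\eta}^{(x)}}$, then $\tilde\phi^{(x)}_{y,\eta,\epsilon}\notin\mathrm{Range}(\tilde L_D^{(x)})$ for all $\epsilon>0$.
   Context: $D\subset\mathbb R^3$ is a bounded Lipschitz domain (open, connected) with $\mathbb R^3\setminus\overline D$ connected, $D\subset B_R=\{|x|<R\}$; $0\le t_{\min}<t_{\max}$; $S\in C([t_{\min},t_{\max}];L^\infty(D))$ real-valued with $S\ge c_0>0$ a.e. on $D\times[t_{\min},t_{\max}]$. Let $0\le k_{\min}<k_{\max}$, $K=(k_{\max}-k_{\min})/2$, $X_D=L^2(D\times(t_{\min},t_{\max}))$. For $|x|=R$, $\tilde L_D^{(x)}:X_D\to L^2(0,K)$ is $(\tilde L_D^{(x)}u)(\tau)=\int_{t_{\min}}^{t_{\max}}\int_D e^{{\rm i}\tau(t+|x-y|)}u(y,t)\,dy\,dt$, $\tau\in[0,K]$. Test function: for $y\in\mathbb R^3$, $\epsilon>0$, $\eta>t_{\min}$, $\tilde\phi^{(x)}_{y,\eta,\epsilon}(k)=\frac{1}{(\eta-t_{\min})|B_\epsilon(y)|}\int_{t_{\min}}^{\eta}\int_{B_\epsilon(y)}e^{{\rm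 i}k(t+|x-z|)}\,dz\,dt$, $k\in[0,K]$ ($B_\epsilon(y)$ open ball, $|B_\epsilon(y)|$ its volume). Annuli: $A_D^{(x)}=\{y\in\mathbb R^3:\inf_{z\in D}|x-z|<|x-y|<\sup_{z\in D}|x-z|\}$ and $A_{D,\eta}^{(x)}=\{y\in\mathbb R^3:\inf_{z\in D}|x-z|<|x-y|<\sup_{z\in D}|x-z|+t_{\max}-\eta\}$. *)

theory Defs
  imports "HOL-Analysis.Analysis"
begin

type_synonym pt = "real^3"

definition lipschitz_domain :: "pt set \<Rightarrow> bool" where
  "lipschitz_domain D \<longleftrightarrow> open D \<and> bounded D \<and> connected D \<and> D \<noteq> {} \<and>
     (\<forall>p\<in>frontier D. \<exists>r>0. \<exists>Q::pt \<Rightarrow> pt. \<exists>g::real \<times> real \<Rightarrow> real. \<exists>C.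
        orthogonal_transformation Q \<and> C-lipschitz_on UNIV g \<and>
        D \<inter> ball p r = {y \<in> ball p r. (Q (y - p)) $ 3 > g ((Q (y - p)) $ 1, (Q (y - p)) $ 2)})"

definition XD :: "pt set \<Rightarrow> real \<Rightarrow> real \<Rightarrow> (pt \<times> real \<Rightarrow> complex) set" where
  "XD D tmin tmax = {u. u \<in> borel_measurable lborel \<and>
      set_integrable lborel (D \<times> {tmin<..<tmax}) (\<lambda>p. (cmod (u p))\<^sup>2)}"

definition LD :: "pt set \<Rightarrow> real \<Rightarrow> real \<Rightarrow> pt \<Rightarrow> (pt \<times> real \<Rightarrow> complex) \<Rightarrow> real \<Rightarrow> complex" where
  "LD D tmin tmax x u \<tau> =
     (LINT p : D \<times> {tmin<..<tmax} | lborel.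
        exp (\<i> * complex_of_real (\<tau> * (snd p + dist x (fst p)))) * u p)"

text \<open>Range of \<tilde>L_D^{(x)} as a map into L^2(0,K): equality almost everywhere on (0,K).\<close>
definition in_range_LD :: "pt set \<Rightarrow> real \<Rightarrow> real \<Rightarrow> real \<Rightarrow> pt \<Rightarrow> (real \<Rightarrow> complex) \<Rightarrow> bool" where
  "in_range_LD D tmin tmax K x \<phi> \<longleftrightarrow>
     (\<exists>u \<in> XD D tmin tmax. AE \<tau> in lborel. \<tau> \<in> {0<..<K} \<longrightarrow> LD D tmin tmax x u \<tau> = \<phi> \<tau>)"

definition test_fn :: "real \<Rightarrow> pt \<Rightarrow> pt \<Rightarrow> real \<Rightarrow> real \<Rightarrow> real \<Rightarrow> complex" where
  "test_fn tmin x y \<eta> \<epsilon> k =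
     complex_of_real (1 / ((\<eta> - tmin) * measure lborel (ball y \<epsilon>))) *
     (LINT p : ball y \<epsilon> \<times> {tmin<..<\<eta>} | lborel.
        exp (\<i> * complex_of_real (k * (snd p + dist x (fst p)))))"

definition annulus_D :: "pt set \<Rightarrow> pt \<Rightarrow> pt set" where
  "annulus_D D x = {y. (INF z\<in>D. dist x z) < dist x y \<and> dist x y < (SUP z\<in>D. dist x z)}"

definition annulus_D_eta :: "pt set \<Rightarrow> real \<Rightarrow> real \<Rightarrow> pt \<Rightarrow> pt set" where
  "annulus_D_eta D tmax \<eta> x =
     {y. (INF z\<in>D. dist x z) < dist x y \<and> dist x y < (SUP z\<in>D. dist x z) + tmax - \<eta>}"

end

theory Submission
  imports Defs
begin


definition refl_map :: "pt \<Rightarrow> pt \<Rightarrow> pt \<Rightarrow> pt" where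
  "refl_map x n z = z - (2 * ((z - x) \<bullet> n)) *\<^sub>R n"

lemma refl_lin: "norm n = 1 \<Longrightarrow> orthogonal_transformation (\<lambda>v::pt. v - (2 * (v \<bullet> n)) *\<^sub>R n)"
  unfolding orthogonal_transformation_def
proof (intro conjI allI)
  assume n: "norm n = 1"
  show "linear (\<lambda>v::pt. v - (2 * (v \<bullet> n)) *\<^sub>R n)"
    by (simp add: linear_iff inner_add_left algebra_simps scaleR_add_left)
  fix v w :: pt
  have "n \<bullet> n = 1" using n by (simp add: norm_eq_1)
  then show "(v - (2 * (v \<bullet> n)) *\<^sub>R n) \<bullet> (w - (2 * (w \<bullet> n)) *\<^sub>R n) = v \<bullet> w"
    by (simp add: inner_diff_left inner_diff_right inner_commute algebra_simps)
qed

lemma refl_invol: "norm n = 1 \<Longrightarrow> refl_map x n (refl_map x n z) = z"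
proof -
  assume n: "norm n = 1"
  have "n \<bullet> n = 1" using n by (simp add: norm_eq_1)
  then show ?thesis unfolding refl_map_def
    by (simp add: inner_diff_left inner_commute algebra_simps)
qed

lemma refl_dist: "norm n = 1 \<Longrightarrow> dist (refl_map x n a) (refl_map x n b) = dist a b"
proof -
  assume n: "norm n = 1"
  have "refl_map x n a - refl_map x n b = (\<lambda>v::pt. v - (2 * (v \<bullet> n)) *\<^sub>R n) (a - b)"
    unfolding refl_map_def by (simp add: inner_diff_left algebra_simps)
  then show ?thesis using orthogonal_transformation_norm[OF refl_lin[OF n]] by (simp add: dist_norm)
qed

lemma refl_fix: "refl_map x n x = x" unfolding refl_map_def by simp

lemma refl_cont: "continuous_on UNIV (refl_map x n)"
  unfolding refl_map_def by (intro continuous_intros)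

lemma refl_meas[measurable]: "refl_map x n \<in> borel_measurable borel"
  using refl_cont borel_measurable_continuous_onI by blast

lemma refl_image: "norm n = 1 \<Longrightarrow> refl_map x n ` S = (+) x ` ((\<lambda>v::pt. v - (2 * (v \<bullet> n)) *\<^sub>R n) ` ((\<lambda>z. z - x) ` S))"
  unfolding refl_map_def image_image by (intro image_cong refl) (simp add: inner_diff_left algebra_simps)

lemma refl_distr: assumes n: "norm n = 1" shows "distr lborel borel (refl_map x n) = lborel"
proof (rule lborel_eqI[symmetric])
  fix l u :: pt assume le: "\<And>b. b \<in> Basis \<Longrightarrow> l \<bullet> b \<le> u \<bullet> b"
  let ?H = "refl_map x n"
  have pre: "?H -` box l u = ?H ` box l u"
    using refl_invol[OF n] by (auto simp: image_iff) (metis)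
  have bor: "?H -` box l u \<in> sets borel"
    using measurable_sets[OF refl_meas, of "box l u" x n] by simp
  have lm: "?H ` box l u \<in> lmeasurable" unfolding refl_image[OF n]
    by (intro measurable_translation measurable_orthogonal_image[OF refl_lin[OF n]] measurable_translation_subtract) simp
  have mm: "measure lebesgue (?H ` box l u) = measure lebesgue (box l u)" unfolding refl_image[OF n]
    by (simp add: measure_translation measure_orthogonal_image[OF refl_lin[OF n]] measurable_translation_subtract measure_translation_subtract)
  have "emeasure (distr lborel borel ?H) (box l u) = emeasure lborel (?H -` box l u)"
    by (simp add: emeasure_distr)
  also have "\<dots> = emeasure lebesgue (?H ` box l u)" using bor pre by simp
  also have "\<dots> = ennreal (measure lebesgue (?H ` box l u))" using lm by (simp add: emeasure_eq_measure2)
  also have "\<dots> = ennreal (measure lebesgue (box l u))" using mm by simp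
  also have "\<dots> = emeasure lebesgue (box l u)" by (simp add: emeasure_eq_measure2)
  also have "\<dots> = (\<Prod>b\<in>Basis. (u - l) \<bullet> b)" using le by simp
  finally show "emeasure (distr lborel borel ?H) (box l u) = (\<Prod>b\<in>Basis. (u - l) \<bullet> b)" .
qed simp



lemma distr_prod_refl: assumes n: "norm n = 1"
  shows "distr lborel borel (\<lambda>p::pt\<times>real. (refl_map x n (fst p), snd p)) = lborel"
proof -
  have "distr lborel borel (refl_map x n) \<Otimes>\<^sub>M distr lborel borel (\<lambda>t::real. t)
     = distr (lborel \<Otimes>\<^sub>M lborel) (borel \<Otimes>\<^sub>M borel) (\<lambda>(a, b). (refl_map x n a, b))"
    by (rule pair_measure_distr) (auto simp: distr_id2 refl_distr[OF n] intro: lborel.sigma_finite_measure_axioms)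
  moreover have "distr (lborel \<Otimes>\<^sub>M lborel) (borel \<Otimes>\<^sub>M borel) (\<lambda>(a, b::real). (refl_map x n a, b))
     = distr lborel borel (\<lambda>p::pt\<times>real. (refl_map x n (fst p), snd p))"
    by (rule distr_cong) (simp_all add: lborel_prod borel_prod[symmetric] split: prod.split)
  ultimately show ?thesis
    by (simp add: refl_distr[OF n] distr_id2 lborel_prod)
qed

lemma integral_refl: fixes f :: "pt\<times>real \<Rightarrow> complex" assumes n: "norm n = 1" and [measurable]: "f \<in> borel_measurable borel"
  shows "integral\<^sup>L lborel f = (\<integral>p. f (refl_map x n (fst p), snd p) \<partial>(lborel::(pt\<times>real) measure))"
proof -
  have m0: "(\<lambda>p::pt\<times>real. (refl_map x n (fst p), snd p)) \<in> borel_measurable borel"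
    by (intro borel_measurable_continuous_onI) (simp add: refl_map_def, intro continuous_intros)
  then have m: "(\<lambda>p::pt\<times>real. (refl_map x n (fst p), snd p)) \<in> lborel \<rightarrow>\<^sub>M borel"
    by simp
  have "integral\<^sup>L lborel f = integral\<^sup>L (distr lborel borel (\<lambda>p::pt\<times>real. (refl_map x n (fst p), snd p))) f"
    by (simp add: distr_prod_refl[OF n])
  also have "\<dots> = (\<integral>p. f (refl_map x n (fst p), snd p) \<partial>lborel)"
    by (rule integral_distr[OF m]) simp
  finally show ?thesis .
qed


lemma dist_bounds:
  fixes D :: "pt set"
  assumes "bounded D" "D \<noteq> {}"
  shows "bdd_below ((\<lambda>z. dist x z) ` D)" "bdd_above ((\<lambda>z. dist x z) ` D)"
proof -
  show "bdd_below ((\<lambda>z. dist x z) ` D)" by (rule bdd_belowI2[where m=0]) simp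
  obtain B where B: "\<forall>z\<in>D. norm z \<le> B" using assms(1) bounded_iff by blast
  show "bdd_above ((\<lambda>z. dist x z) ` D)"
    by (rule bdd_aboveI2[where M="norm x + B"]) (metis B add_left_mono dist_norm norm_triangle_ineq4 order_trans)
qed

lemma exists_same_dist:
  fixes D :: "pt set"
  assumes "bounded D" "D \<noteq> {}" "connected D" "y \<in> annulus_D D x"
  shows "\<exists>z0\<in>D. dist x z0 = dist x y"
proof -
  from assms(4) have a: "(INF z\<in>D. dist x z) < dist x y" and b: "dist x y < (SUP z\<in>D. dist x z)"
    unfolding annulus_D_def by auto
  obtain z1 where z1: "z1 \<in> D" "dist x z1 < dist x y"
    using a cINF_less_iff[OF assms(2) dist_bounds(1)[OF assms(1,2)]] by blast
  obtain z2 where z2: "z2 \<in> D" "dist x y < dist x z2"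
    using b less_cSUP_iff[OF assms(2) dist_bounds(2)[OF assms(1,2)]] by blast
  have c: "connected ((\<lambda>z. dist x z) ` D)"
    by (intro connected_continuous_image assms(3) continuous_intros)
  have "{dist x z1..dist x z2} \<subseteq> (\<lambda>z. dist x z) ` D"
    by (rule connected_contains_Icc[OF c]) (use z1 z2 in auto)
  moreover have "dist x y \<in> {dist x z1..dist x z2}" using z1 z2 by auto
  ultimately show ?thesis by (metis (no_types, lifting) imageE subsetD)
qed

lemma refl_maps_to:
  fixes x y z0 :: pt
  assumes "dist x z0 = dist x y" "y \<noteq> z0"
  defines "n \<equiv> (1 / norm (y - z0)) *\<^sub>R (y - z0)"
  shows "norm n = 1" "refl_map x n z0 = y"
proof -
  have nz: "norm (y - z0) \<noteq> 0" using assms(2) by simp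
  show "norm n = 1" unfolding n_def using nz by simp
  have e: "norm (x - z0) = norm (x - y)" using assms(1) by (simp add: dist_norm)
  have "(x - y) \<bullet> (x - y) = (x - z0) \<bullet> (x - z0)" using e by (simp add: power2_norm_eq_inner[symmetric])
  then have key: "(z0 - x) \<bullet> (y - z0) = - ((y - z0) \<bullet> (y - z0)) / 2"
    by (simp add: inner_diff_left inner_diff_right inner_commute algebra_simps)
  have nn: "(y - z0) \<bullet> (y - z0) = (norm (y - z0))\<^sup>2" by (simp add: power2_norm_eq_inner)
  have i: "(z0 - x) \<bullet> n = - norm (y - z0) / 2"
    unfolding n_def using key nn nz by (simp add: power2_eq_square)
  have "refl_map x n z0 = z0 + norm (y - z0) *\<^sub>R n"
    unfolding refl_map_def i by simp
  also have "\<dots> = z0 + (y - z0)" using nz unfolding n_def by simp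
  finally show "refl_map x n z0 = y" by simp
qed

lemma int_ball_move:
  fixes x y z0 :: pt and f :: "real \<Rightarrow> complex"
  assumes "dist x z0 = dist x y" and J: "J \<in> sets borel" and f: "continuous_on UNIV f"
  shows "(LINT p : ball y e \<times> J | lborel. f (snd p + dist x (fst p)))
       = (LINT p : ball z0 e \<times> J | lborel. f (snd p + dist x (fst p)))"
proof (cases "y = z0")
  case True then show ?thesis by simp
next
  case False
  define n where "n \<equiv> (1 / norm (y - z0)) *\<^sub>R (y - z0)"
  have n: "norm n = 1" and Hz0: "refl_map x n z0 = y"
    using refl_maps_to[OF assms(1) False] unfolding n_def by auto
  have dH: "dist x (refl_map x n z) = dist x z" for z
    using refl_dist[OF n, of x x z] by (simp add: refl_fix)
  have bH: "dist y (refl_map x n z) = dist z0 z" for z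
    using refl_dist[OF n, of x z0 z] Hz0 by (simp add: dist_commute)
  have fm[measurable]: "f \<in> borel_measurable borel" using f borel_measurable_continuous_onI by blast
  have Jm[measurable]: "J \<in> sets lborel" using J by simp
  have m: "(\<lambda>p::pt\<times>real. indicator (ball y e \<times> J) p *\<^sub>R f (snd p + dist x (fst p))) \<in> borel_measurable borel"
    using J by (simp add: borel_prod[symmetric])
  show ?thesis unfolding set_lebesgue_integral_def
    apply (subst integral_refl[OF n m, of x])
    apply (rule Bochner_Integration.integral_cong[OF refl])
    apply (auto simp add: dH indicator_def bH mem_Times_iff)
    done
qed



lemma part_i:
  fixes D :: "pt set"
  assumes "open D" "bounded D" "D \<noteq> {}" "connected D" "y \<in> annulus_D D x"
  shows "\<exists>\<epsilon>0>0. \<forall>\<epsilon>\<in>{0<..<\<epsilon>0}. \<forall>\<eta>\<in>{tmin<..tmax}.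
            in_range_LD D tmin tmax K x (test_fn tmin x y \<eta> \<epsilon>)"
proof -
  obtain z0 where z0: "z0 \<in> D" "dist x z0 = dist x y" using exists_same_dist assms(2-5) by blast
  obtain \<delta> where \<delta>: "\<delta> > 0" "ball z0 \<delta> \<subseteq> D" using assms(1) z0(1) openE by blast
  show ?thesis
  proof (intro exI[of _ \<delta>] conjI ballI \<delta>(1))
    fix \<epsilon> \<eta> assume \<epsilon>: "\<epsilon> \<in> {0<..<\<delta>}" and \<eta>: "\<eta> \<in> {tmin<..tmax}"
    define J where "J = {tmin<..<\<eta>}"
    define c where "c = 1 / ((\<eta> - tmin) * measure lborel (ball y \<epsilon>))"
    define S where "S = ball z0 \<epsilon> \<times> J"
    define u where "u = (\<lambda>p::pt\<times>real. complex_of_real c * indicator S p)"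
    have Sopen: "open S" unfolding S_def J_def by (intro open_Times) auto
    have Sm[measurable]: "S \<in> sets borel" "S \<in> sets lborel" using Sopen by auto
    have Ssub: "S \<subseteq> D \<times> {tmin<..<tmax}" using \<delta> \<epsilon> \<eta> unfolding S_def J_def by auto
    have Sfin: "emeasure lborel S < \<infinity>" unfolding S_def J_def
      by (intro emeasure_bounded_finite bounded_Times) auto
    have um[measurable]: "u \<in> borel_measurable lborel" unfolding u_def by measurable
    have "u \<in> XD D tmin tmax"
      unfolding XD_def set_integrable_def
    proof (intro CollectI conjI um)
      have "integrable lborel (\<lambda>p. c\<^sup>2 * indicator S p)"
        using Sm Sfin by (intro integrable_mult_right integrable_real_indicator) auto
      moreover have "indicator (D \<times> {tmin<..<tmax}) p *\<^sub>R (cmod (u p))\<^sup>2 = c\<^sup>2 * indicator S p" for p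
        using Ssub unfolding u_def by (auto simp: indicator_def power2_eq_square norm_mult)
      ultimately show "integrable lborel (\<lambda>p. indicator (D \<times> {tmin<..<tmax}) p *\<^sub>R (cmod (u p))\<^sup>2)"
        by simp
    qed
    moreover have "LD D tmin tmax x u \<tau> = test_fn tmin x y \<eta> \<epsilon> \<tau>" for \<tau>
    proof -
      let ?f = "\<lambda>s::real. exp (\<i> * complex_of_real (\<tau> * s))"
      have fc: "continuous_on UNIV ?f" by (intro continuous_intros)
      have "LD D tmin tmax x u \<tau> = (\<integral>p. complex_of_real c * (indicator S p *\<^sub>R ?f (snd p + dist x (fst p))) \<partial>lborel)"
        unfolding LD_def set_lebesgue_integral_def u_def
        by (rule Bochner_Integration.integral_cong[OF refl]) (use Ssub in \<open>auto simp: indicator_def\<close>)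
      also have "\<dots> = complex_of_real c * (LINT p : ball z0 \<epsilon> \<times> J | lborel. ?f (snd p + dist x (fst p)))"
        unfolding set_lebesgue_integral_def S_def by (rule integral_mult_right_zero)
      also have "\<dots> = complex_of_real c * (LINT p : ball y \<epsilon> \<times> J | lborel. ?f (snd p + dist x (fst p)))"
        using int_ball_move[OF z0(2), of J ?f \<epsilon>] fc unfolding J_def by simp
      also have "\<dots> = test_fn tmin x y \<eta> \<epsilon> \<tau>"
        unfolding test_fn_def c_def J_def by simp
      finally show ?thesis .
    qed
    ultimately show "in_range_LD D tmin tmax K x (test_fn tmin x y \<eta> \<epsilon>)"
      unfolding in_range_LD_def by auto
  qed
qed



lemma unit_dir: fixes x p :: pt shows "\<exists>w. norm w = 1 \<and> p - x = dist x p *\<^sub>R w"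
proof (cases "p = x")
  case True
  obtain w :: pt where "w \<in> Basis" using nonempty_Basis by blast
  then show ?thesis using True by (intro exI[of _ w]) auto
next
  case False
  then show ?thesis
    by (intro exI[of _ "(1 / norm (p - x)) *\<^sub>R (p - x)"]) (auto simp: dist_norm norm_minus_commute)
qed

lemma dist_along: fixes x p w :: pt assumes "norm w = 1" "p - x = dist x p *\<^sub>R w" "dist x p + s \<ge> 0"
  shows "dist x (p + s *\<^sub>R w) = dist x p + s"
proof -
  have "p + s *\<^sub>R w - x = (dist x p + s) *\<^sub>R w" using assms(2) by (simp add: algebra_simps)
  moreover have "dist x (p + s *\<^sub>R w) = norm (p + s *\<^sub>R w - x)" by (simp add: dist_norm norm_minus_commute)
  ultimately have "dist x (p + s *\<^sub>R w) = norm ((dist x p + s) *\<^sub>R w)" by metis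
  then show ?thesis using assms(1,3) by simp
qed

lemma a_lt_b:
  fixes D :: "pt set"
  assumes "open D" "bounded D" "D \<noteq> {}"
  shows "(INF z\<in>D. dist x z) < (SUP z\<in>D. dist x z)"
proof -
  obtain z where z: "z \<in> D" using assms(3) by blast
  obtain \<delta> where \<delta>: "\<delta> > 0" "ball z \<delta> \<subseteq> D" using assms(1) z openE by blast
  obtain w where w: "norm w = 1" "z - x = dist x z *\<^sub>R w" using unit_dir by blast
  define z' where "z' = z + (\<delta>/2) *\<^sub>R w"
  have "z' \<in> D" using \<delta> w unfolding z'_def by (intro subsetD[OF \<delta>(2)]) (simp add: dist_norm)
  have dz': "dist x z' = dist x z + \<delta>/2" unfolding z'_def using w \<delta> by (intro dist_along) auto
  have "(INF z\<in>D. dist x z) \<le> dist x z" by (rule cINF_lower[OF dist_bounds(1)[OF assms(2,3)] z])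
  also have "\<dots> < dist x z'" using dz' \<delta> by simp
  also have "\<dots> \<le> (SUP z\<in>D. dist x z)" by (rule cSUP_upper[OF \<open>z' \<in> D\<close> dist_bounds(2)[OF assms(2,3)]])
  finally show ?thesis .
qed

lemma a_nonneg: fixes D :: "pt set" assumes "D \<noteq> {}" shows "(INF z\<in>D. dist x z) \<ge> 0"
  using assms by (intro cINF_greatest) auto

lemma outside_closure:
  fixes D :: "pt set"
  assumes "open D" "bounded D" "D \<noteq> {}" "\<eta> \<le> tmax"
    and y: "y \<notin> closure (annulus_D_eta D tmax \<eta> x)"
  shows "dist x y < (INF z\<in>D. dist x z) \<or> dist x y > (SUP z\<in>D. dist x z) + tmax - \<eta>"
proof (rule ccontr)
  define a where "a = (INF z\<in>D. dist x z)"
  define c where "c = (SUP z\<in>D. dist x z) + tmax - \<eta>"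
  define d where "d = dist x y"
  assume "\<not> ?thesis"
  then have ad: "a \<le> d" "d \<le> c" unfolding a_def c_def d_def by auto
  have ac: "a < c" using a_lt_b[OF assms(1-3), of x] assms(4) unfolding a_def c_def by simp
  have a0: "a \<ge> 0" unfolding a_def by (rule a_nonneg[OF assms(3)])
  obtain w where w: "norm w = 1" "y - x = d *\<^sub>R w" using unit_dir unfolding d_def by blast
  have "y \<in> closure (annulus_D_eta D tmax \<eta> x)"
    unfolding closure_approachable
  proof (intro allI impI)
    fix e :: real assume e: "e > 0"
    define s where "s = (if d < c then min (e/2) ((c - d)/2) else - min (e/2) ((c - a)/2))"
    have s1: "a < d + s" "d + s < c" "\<bar>s\<bar> < e"
      using ad ac e s_def by (auto simp: min_def field_simps split: if_splits)
    have dz: "dist x (y + s *\<^sub>R w) = d + s"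
      using dist_along[of w y x s] w s1 a0 unfolding d_def by auto
    show "\<exists>z\<in>annulus_D_eta D tmax \<eta> x. dist z y < e"
    proof (intro bexI[of _ "y + s *\<^sub>R w"])
      show "dist (y + s *\<^sub>R w) y < e" using w s1 by (simp add: dist_norm)
      show "y + s *\<^sub>R w \<in> annulus_D_eta D tmax \<eta> x"
        unfolding annulus_D_eta_def using dz s1 unfolding a_def c_def by auto
    qed
  qed
  then show False using y by simp
qed

lemma open_emeasure_pos: fixes U :: "'a::euclidean_space set"
  assumes "open U" "p \<in> U" shows "0 < emeasure lborel U"
proof -
  obtain r where r: "r > 0" "ball p r \<subseteq> U" using assms openE by blast
  have "emeasure lborel (ball p r) = ennreal (measure lborel (ball p r))"
    using emeasure_lborel_ball_finite[of p r] by (simp add: emeasure_eq_ennreal_measure less_top[symmetric])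
  then have "0 < emeasure lborel (ball p r)" using content_ball_pos[OF r(1)] by simp
  also have "\<dots> \<le> emeasure lborel U" using r assms(1) by (intro emeasure_mono) auto
  finally show ?thesis .
qed



lemma expansion:
  fixes g :: "'a \<Rightarrow> complex" and \<phi> :: "'a \<Rightarrow> real" and k :: complex
  assumes gi: "integrable M g" and \<phi>m[measurable]: "\<phi> \<in> borel_measurable M"
    and bd: "\<And>p. g p \<noteq> 0 \<Longrightarrow> \<bar>\<phi> p\<bar> \<le> B" and B0: "B \<ge> 0"
  shows "(\<lambda>n. ((\<i> * k)^n / fact n) * (\<integral>p. complex_of_real (\<phi> p ^ n) * g p \<partial>M))
          sums (\<integral>p. exp (\<i> * (k * complex_of_real (\<phi> p))) * g p \<partial>M)"
proof -
  have gm[measurable]: "g \<in> borel_measurable M" using gi by simp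
  define f where "f n p = ((\<i> * k)^n / fact n) * (complex_of_real (\<phi> p ^ n) * g p)" for n p
  define C where "C n = (norm k * B)^n / fact n" for n
  have C0: "C n \<ge> 0" for n
    unfolding C_def using B0 by simp
  have nf: "norm (f n p) \<le> C n * norm (g p)" for n p
  proof (cases "g p = 0")
    case True then show ?thesis using C0 unfolding f_def by simp
  next
    case False
    then have "\<bar>\<phi> p\<bar> \<le> B" by (rule bd)
    then have "\<bar>\<phi> p\<bar> ^ n \<le> B ^ n" by (simp add: power_mono)
    then have "norm k^n * \<bar>\<phi> p\<bar> ^ n \<le> norm k^n * B ^ n" by (simp add: mult_left_mono)
    then have "norm k^n * \<bar>\<phi> p\<bar> ^ n * cmod (g p) \<le> norm k^n * B ^ n * cmod (g p)"
      by (simp add: mult_right_mono)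
    then have "norm k^n * \<bar>\<phi> p\<bar> ^ n * cmod (g p) / fact n \<le> norm k^n * B ^ n * cmod (g p) / fact n"
      by (simp add: divide_right_mono)
    then show ?thesis unfolding f_def C_def
      by (simp add: norm_mult norm_divide norm_power power_mult_distrib mult.assoc)
  qed
  have fm[measurable]: "f n \<in> borel_measurable M" for n unfolding f_def by measurable
  have fi: "integrable M (f n)" for n
    by (rule Bochner_Integration.integrable_bound[of _ "\<lambda>p. C n * norm (g p)"])
       (use gi nf C0 in \<open>auto intro!: integrable_mult_right integrable_norm\<close>)
  have ps: "(\<lambda>n. f n p) sums (exp (\<i> * (k * complex_of_real (\<phi> p))) * g p)" for p
  proof -
    have "(\<lambda>n. (\<i> * (k * complex_of_real (\<phi> p)))^n /\<^sub>R fact n) sums exp (\<i> * (k * complex_of_real (\<phi> p)))"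
      by (rule exp_converges)
    then have "(\<lambda>n. (\<i> * (k * complex_of_real (\<phi> p)))^n /\<^sub>R fact n * g p) sums (exp (\<i> * (k * complex_of_real (\<phi> p))) * g p)"
      by (rule sums_mult2)
    moreover have "(\<i> * (k * complex_of_real (\<phi> p)))^n /\<^sub>R fact n * g p = f n p" for n
      unfolding f_def by (simp add: scaleR_conv_of_real power_mult_distrib field_simps)
    ultimately show ?thesis by simp
  qed
  have Cs: "summable C" unfolding C_def using exp_converges[of "norm k * B"] by (simp add: sums_iff divide_inverse mult.commute)
  have s1: "AE p in M. summable (\<lambda>n. norm (f n p))"
    by (intro AE_I2 summable_comparison_test[OF _ summable_mult2[OF Cs]]) (use nf in auto)
  have s2: "summable (\<lambda>n. \<integral>p. norm (f n p) \<partial>M)"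
  proof (rule summable_comparison_test[OF _ summable_mult2[OF Cs, of "\<integral>p. norm (g p) \<partial>M"]])
    show "\<exists>N. \<forall>n\<ge>N. norm (\<integral>p. norm (f n p) \<partial>M) \<le> C n * (\<integral>p. norm (g p) \<partial>M)"
    proof (intro exI allI impI)
      fix n
      have "(\<integral>p. norm (f n p) \<partial>M) \<le> (\<integral>p. C n * norm (g p) \<partial>M)"
        by (intro integral_mono integrable_norm fi integrable_mult_right gi) (use nf in auto)
      then show "norm (\<integral>p. norm (f n p) \<partial>M) \<le> C n * (\<integral>p. norm (g p) \<partial>M)" by simp
    qed
  qed
  have "(\<lambda>n. integral\<^sup>L M (f n)) sums (\<integral>p. (\<Sum>n. f n p) \<partial>M)"
    by (rule sums_integral[OF fi s1 s2])
  moreover have "(\<integral>p. (\<Sum>n. f n p) \<partial>M) = (\<integral>p. exp (\<i> * (k * complex_of_real (\<phi> p))) * g p \<partial>M)"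
    using ps by (simp add: sums_iff)
  moreover have "integral\<^sup>L M (f n) = ((\<i> * k)^n / fact n) * (\<integral>p. complex_of_real (\<phi> p ^ n) * g p \<partial>M)" for n
    unfolding f_def by (rule integral_mult_right_zero)
  ultimately show ?thesis by simp
qed



lemma powser_shift_summable:
  fixes a :: "nat \<Rightarrow> complex"
  assumes "\<And>w. summable (\<lambda>n. a n * w^n)"
  shows "summable (\<lambda>n. a (n + j) * w^n)"
proof (cases "w = 0")
  case True then show ?thesis by simp
next
  case False
  have "summable (\<lambda>n. a (n + j) * w^(n + j))"
    using summable_ignore_initial_segment[OF assms[of w], of j] by simp
  then have "summable (\<lambda>n. a (n + j) * w^(n + j) / w^j)" by (rule summable_divide)
  moreover have "a (n + j) * w^(n + j) / w^j = a (n + j) * w^n" for n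
    using False by (simp add: power_add)
  ultimately show ?thesis by simp
qed

lemma AE_interval_dense: fixes K d :: real
  assumes "AE k in lborel. k \<in> {0<..<K} \<longrightarrow> P k" "0 < d" "d \<le> K"
  shows "\<exists>k\<in>{0<..<d}. P k"
proof (rule ccontr)
  assume nt: "\<not> ?thesis"
  have "AE k in lborel. k \<notin> {0<..<d}"
  proof (rule AE_mp[OF assms(1) AE_I2], intro impI notI)
    fix k assume h: "k \<in> {0<..<K} \<longrightarrow> P k" and kd: "k \<in> {0<..<d}"
    then have "P k" using assms(3) by auto
    then show False using nt kd by auto
  qed
  then obtain N where N: "{k \<in> space lborel. \<not> k \<notin> {0<..<d}} \<subseteq> N" "emeasure lborel N = 0" "N \<in> sets lborel"
    by (rule AE_E)
  have "emeasure lborel {0<..<d} \<le> emeasure lborel N" using N by (intro emeasure_mono) auto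
  then show False using N(2) assms(2) by simp
qed

lemma powser_zero_coeffs:
  fixes a :: "nat \<Rightarrow> complex"
  assumes sm: "\<And>w. summable (\<lambda>n. a n * w^n)" and K: "K > 0"
    and ae: "AE k in lborel. k \<in> {0<..<K} \<longrightarrow> (\<Sum>n. a n * complex_of_real k ^ n) = 0"
  shows "a j = 0"
proof (induction j rule: less_induct)
  case (less j)
  define f where "f w = (\<Sum>n. a (n + j) * w^n)" for w
  have fs: "(\<lambda>n. a (n + j) * w^n) sums f w" for w
    unfolding f_def using powser_shift_summable[OF sm] by (simp add: summable_sums)
  have eq: "(\<Sum>n. a n * w ^ n) = w^j * f w" for w
  proof -
    have "(\<lambda>n. w^j * (a (n + j) * w^n)) sums (w^j * f w)" by (rule sums_mult[OF fs])
    then have "(\<lambda>n. a (n + j) * w^(n + j)) sums (w^j * f w)"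
      by (simp add: power_add mult_ac)
    then have "(\<lambda>n. a n * w^n) sums (w^j * f w)"
      using sums_zero_iff_shift[of j "\<lambda>n. a n * w^n"] less.IH by simp
    then show ?thesis by (simp add: sums_iff)
  qed
  have ae2: "AE k in lborel. k \<in> {0<..<K} \<longrightarrow> f (complex_of_real k) = 0"
    using ae by eventually_elim (auto simp: eq)
  have f0: "f 0 = a j" unfolding f_def by (simp add: powser_zero)
  have cont: "isCont f 0" unfolding f_def
    by (rule isCont_powser_converges_everywhere) (rule powser_shift_summable[OF sm])
  show ?case
  proof (rule ccontr)
    assume nz: "a j \<noteq> 0"
    have "\<exists>s>0. \<forall>w. w \<noteq> 0 \<and> norm (w - 0) < s \<longrightarrow> norm (f w - f 0) < norm (a j)"
      using cont nz unfolding isCont_def LIM_eq by simp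
    then obtain \<delta> where \<delta>: "\<delta> > 0" "\<And>w. w \<noteq> 0 \<Longrightarrow> norm w < \<delta> \<Longrightarrow> norm (f w - f 0) < norm (a j)"
      by auto
    obtain k where k: "k \<in> {0<..<min \<delta> K}" "f (complex_of_real k) = 0"
      using AE_interval_dense[OF ae2, of "min \<delta> K"] \<delta>(1) K by auto
    have "norm (f (complex_of_real k) - f 0) < norm (a j)" using k(1) by (intro \<delta>(2)) auto
    then show False using k(2) f0 by simp
  qed
qed



lemma moments_cont:
  fixes g :: "'a \<Rightarrow> complex" and \<phi> :: "'a \<Rightarrow> real" and h :: "real \<Rightarrow> real"
  assumes gi: "integrable M g" and \<phi>m[measurable]: "\<phi> \<in> borel_measurable M"
    and bd: "\<And>p. g p \<noteq> 0 \<Longrightarrow> \<bar>\<phi> p\<bar> \<le> B"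
    and mom: "\<And>n. (\<integral>p. complex_of_real (\<phi> p ^ n) * g p \<partial>M) = 0"
    and hc: "continuous_on UNIV h"
  shows "(\<integral>p. complex_of_real (h (\<phi> p)) * g p \<partial>M) = 0"
proof -
  have gm[measurable]: "g \<in> borel_measurable M" using gi by simp
  have hm[measurable]: "h \<in> borel_measurable borel" using hc borel_measurable_continuous_onI by blast
  have "compact (h ` {-B..B})" by (intro compact_continuous_image continuous_on_subset[OF hc]) auto
  then obtain H where H: "\<And>s. s \<in> {-B..B} \<Longrightarrow> \<bar>h s\<bar> \<le> H"
    using compact_imp_bounded bounded_iff by (metis image_eqI real_norm_def)
  have hgb: "norm (complex_of_real (r (\<phi> p)) * g p) \<le> Hr * norm (g p)"
    if "\<And>s. s \<in> {-B..B} \<Longrightarrow> \<bar>r s\<bar> \<le> Hr" for r Hr p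
  proof (cases "g p = 0")
    case False
    then have "\<bar>\<phi> p\<bar> \<le> B" by (rule bd)
    then have "\<bar>r (\<phi> p)\<bar> \<le> Hr" using that by (simp add: abs_le_iff)
    then show ?thesis by (simp add: norm_mult mult_right_mono)
  qed simp
  have int: "integrable M (\<lambda>p. complex_of_real (r (\<phi> p)) * g p)"
    if "\<And>s. s \<in> {-B..B} \<Longrightarrow> \<bar>r s\<bar> \<le> Hr" "r \<in> borel_measurable borel" for r Hr
  proof (rule Bochner_Integration.integrable_bound[of _ "\<lambda>p. Hr * norm (g p)"])
    show "integrable M (\<lambda>p. Hr * norm (g p))" using gi by auto
    show "(\<lambda>p. complex_of_real (r (\<phi> p)) * g p) \<in> borel_measurable M"
      using that(2) by measurable
    show "AE p in M. norm (complex_of_real (r (\<phi> p)) * g p) \<le> norm (Hr * norm (g p))"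
    proof (intro AE_I2)
      fix p
      have "norm (complex_of_real (r (\<phi> p)) * g p) \<le> Hr * norm (g p)" by (rule hgb[of r Hr p, OF that(1)])
      also have "\<dots> \<le> norm (Hr * norm (g p))" by (simp only: real_norm_def abs_ge_self)
      finally show "norm (complex_of_real (r (\<phi> p)) * g p) \<le> norm (Hr * norm (g p))" .
    qed
  qed
  have le: "norm (\<integral>p. complex_of_real (h (\<phi> p)) * g p \<partial>M) \<le> e * (\<integral>p. norm (g p) \<partial>M)" if e: "e > 0" for e
  proof -
    obtain q where q: "real_polynomial_function q" "\<And>s. s \<in> {-B..B} \<Longrightarrow> \<bar>h s - q s\<bar> < e"
      using Stone_Weierstrass_real_polynomial_function[of "{-B..B}" h e] e continuous_on_subset[OF hc] by auto
    obtain c N where qe: "q = (\<lambda>s. \<Sum>i\<le>N. c i * s^i)" using q(1) real_polynomial_function_iff_sum by blast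
    have qm[measurable]: "q \<in> borel_measurable borel" unfolding qe by measurable
    have pi: "integrable M (\<lambda>p. complex_of_real (\<phi> p ^ i) * g p)" for i
    proof (rule int[of "\<lambda>s. s^i" "B^i"])
      fix s :: real assume "s \<in> {-B..B}"
      then have "\<bar>s\<bar> \<le> B" by auto
      then have "\<bar>s\<bar>^i \<le> B^i" by (rule power_mono) simp
      then show "\<bar>s^i\<bar> \<le> B^i" by (simp add: power_abs)
    qed simp
    have "(\<integral>p. complex_of_real (q (\<phi> p)) * g p \<partial>M) = (\<integral>p. (\<Sum>i\<le>N. complex_of_real (c i) * (complex_of_real (\<phi> p ^ i) * g p)) \<partial>M)"
      unfolding qe by (intro Bochner_Integration.integral_cong refl) (simp add: sum_distrib_right sum_distrib_left mult_ac)
    also have "\<dots> = (\<Sum>i\<le>N. complex_of_real (c i) * (\<integral>p. complex_of_real (\<phi> p ^ i) * g p \<partial>M))"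
      using pi by (simp add: integral_sum)
    also have "\<dots> = 0" using mom by simp
    finally have q0: "(\<integral>p. complex_of_real (q (\<phi> p)) * g p \<partial>M) = 0" .
    obtain Hq where Hq: "\<And>s. s \<in> {-B..B} \<Longrightarrow> \<bar>q s\<bar> \<le> Hq"
    proof
      fix s assume "s \<in> {-B..B}"
      then show "\<bar>q s\<bar> \<le> H + e" using H[of s] q(2)[of s] by linarith
    qed
    have hi: "integrable M (\<lambda>p. complex_of_real (h (\<phi> p)) * g p)" by (rule int[OF H hm])
    have qi: "integrable M (\<lambda>p. complex_of_real (q (\<phi> p)) * g p)" by (rule int[OF Hq qm])
    have "(\<integral>p. complex_of_real (h (\<phi> p)) * g p \<partial>M) = (\<integral>p. complex_of_real ((h - q) (\<phi> p)) * g p \<partial>M)"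
      using q0 hi qi by (simp add: ring_distribs Bochner_Integration.integral_diff)
    also have "norm \<dots> \<le> (\<integral>p. norm (complex_of_real ((h - q) (\<phi> p)) * g p) \<partial>M)"
      by (rule integral_norm_bound)
    also have "\<dots> \<le> (\<integral>p. e * norm (g p) \<partial>M)"
    proof (rule integral_mono)
      show "integrable M (\<lambda>p. norm (complex_of_real ((h - q) (\<phi> p)) * g p))"
        using hi qi by (intro integrable_norm) (simp add: ring_distribs)
      show "integrable M (\<lambda>p. e * norm (g p))" using gi by auto
      show "norm (complex_of_real ((h - q) (\<phi> p)) * g p) \<le> e * norm (g p)" for p
        by (rule hgb) (use q(2) in \<open>auto simp: less_imp_le\<close>)
    qed
    finally show ?thesis by simp
  qed
  show ?thesis
  proof (rule ccontr)
    assume nz: "(\<integral>p. complex_of_real (h (\<phi> p)) * g p \<partial>M) \<noteq> 0"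
    define I where "I = (\<integral>p. norm (g p) \<partial>M)"
    have I0: "I \<ge> 0" unfolding I_def by simp
    define nn where "nn = norm (\<integral>p. complex_of_real (h (\<phi> p)) * g p \<partial>M)"
    have nn0: "nn > 0" using nz unfolding nn_def by simp
    define e where "e = nn / (2 * (I + 1))"
    have e0: "e > 0" using nn0 I0 unfolding e_def by simp
    have "nn \<le> e * I" using le[OF e0] unfolding I_def nn_def .
    also have "e * I < nn"
    proof -
      have "nn * I < nn * (2 * (I + 1))" using nn0 I0 by (intro mult_strict_left_mono) auto
      then show ?thesis unfolding e_def using I0 by (simp add: field_simps)
    qed
    finally show False by simp
  qed
qed



lemma geometry_h:
  fixes a b d tmin tmax \<eta> :: real
  assumes "d < a \<or> d > b + tmax - \<eta>" "tmin < \<eta>"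
  shows "\<exists>(h::real\<Rightarrow>real) t0. continuous_on UNIV h \<and> (\<forall>s. 0 \<le> h s \<and> h s \<le> 1) \<and>
           (\<forall>s. tmin + a \<le> s \<and> s \<le> tmax + b \<longrightarrow> h s = 0) \<and> t0 \<in> {tmin<..<\<eta>} \<and> h (t0 + d) > 0"
  using assms(1)
proof
  assume da: "d < a"
  define h where "h s = min 1 (max 0 (tmin + a - s))" for s
  define t0 where "t0 = tmin + min ((a - d)/2) ((\<eta> - tmin)/2)"
  have "continuous_on UNIV h" unfolding h_def by (intro continuous_intros)
  moreover have "t0 \<in> {tmin<..<\<eta>}" using da assms(2) unfolding t0_def by (auto simp: min_def field_simps)
  moreover have "h (t0 + d) > 0" using da assms(2) unfolding t0_def h_def by (auto simp: min_def field_simps)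
  moreover have "\<forall>s. 0 \<le> h s \<and> h s \<le> 1" by (auto simp: h_def)
  moreover have "\<forall>s. tmin + a \<le> s \<and> s \<le> tmax + b \<longrightarrow> h s = 0" by (auto simp: h_def)
  ultimately show ?thesis by blast
next
  assume dc: "d > b + tmax - \<eta>"
  define h where "h s = min 1 (max 0 (s - (tmax + b)))" for s
  define t0 where "t0 = \<eta> - min ((d - (b + tmax - \<eta>))/2) ((\<eta> - tmin)/2)"
  have "continuous_on UNIV h" unfolding h_def by (intro continuous_intros)
  moreover have "t0 \<in> {tmin<..<\<eta>}" using dc assms(2) unfolding t0_def by (auto simp: min_def field_simps)
  moreover have "h (t0 + d) > 0" using dc assms(2) unfolding t0_def h_def by (auto simp: min_def field_simps)
  moreover have "\<forall>s. 0 \<le> h s \<and> h s \<le> 1" by (auto simp: h_def)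
  moreover have "\<forall>s. tmin + a \<le> s \<and> s \<le> tmax + b \<longrightarrow> h s = 0" by (auto simp: h_def)
  ultimately show ?thesis by blast
qed

lemma part_ii:
  fixes D :: "pt set" and x y :: pt
  assumes Do: "open D" "bounded D" "D \<noteq> {}" and t: "0 \<le> tmin" "tmin < tmax"
    and \<eta>: "\<eta> \<in> {tmin<..tmax}" and y: "y \<notin> closure (annulus_D_eta D tmax \<eta> x)"
    and \<epsilon>: "\<epsilon> > 0" and K: "K > 0"
  shows "\<not> in_range_LD D tmin tmax K x (test_fn tmin x y \<eta> \<epsilon>)"
proof
  assume "in_range_LD D tmin tmax K x (test_fn tmin x y \<eta> \<epsilon>)"
  then obtain u where uX: "u \<in> XD D tmin tmax"
    and ae: "AE \<tau> in lborel. \<tau> \<in> {0<..<K} \<longrightarrow> LD D tmin tmax x u \<tau> = test_fn tmin x y \<eta> \<epsilon> \<tau>"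
    unfolding in_range_LD_def by blast
  define a where "a = (INF z\<in>D. dist x z)"
  define b where "b = (SUP z\<in>D. dist x z)"
  define S1 where "S1 = D \<times> {tmin<..<tmax}"
  define S2 where "S2 = ball y \<epsilon> \<times> {tmin<..<\<eta>}"
  define c where "c = 1 / ((\<eta> - tmin) * measure lborel (ball y \<epsilon>))"
  define \<phi> where "\<phi> p = snd p + dist x (fst p)" for p :: "pt \<times> real"
  define g where "g p = indicator S1 p * u p - complex_of_real c * indicator S2 p" for p
  have Da: "a \<le> dist x z" "dist x z \<le> b" if "z \<in> D" for z
    unfolding a_def b_def
    by (rule cINF_lower[OF dist_bounds(1)[OF Do(2,3)] that], rule cSUP_upper[OF that dist_bounds(2)[OF Do(2,3)]])
  obtain h t0 where hc: "continuous_on UNIV (h::real\<Rightarrow>real)" and h01: "\<And>s. 0 \<le> h s \<and> h s \<le> 1"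
    and h0: "\<And>s. tmin + a \<le> s \<Longrightarrow> s \<le> tmax + b \<Longrightarrow> h s = 0" and t0: "t0 \<in> {tmin<..<\<eta>}"
    and hp: "h (t0 + dist x y) > 0"
  proof -
    have oc: "dist x y < a \<or> dist x y > b + tmax - \<eta>"
      using outside_closure[OF Do _ y] \<eta> unfolding a_def b_def by auto
    have "tmin < \<eta>" using \<eta> by simp
    then have "\<exists>(h::real\<Rightarrow>real) t0. continuous_on UNIV h \<and> (\<forall>s. 0 \<le> h s \<and> h s \<le> 1) \<and>
           (\<forall>s. tmin + a \<le> s \<and> s \<le> tmax + b \<longrightarrow> h s = 0) \<and> t0 \<in> {tmin<..<\<eta>} \<and> h (t0 + dist x y) > 0"
      by (rule geometry_h[OF oc])
    then show ?thesis using that by blast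
  qed
  have S1o: "open S1" unfolding S1_def by (intro open_Times Do) auto
  have S2o: "open S2" unfolding S2_def by (intro open_Times) auto
  have S1m[measurable]: "S1 \<in> sets lborel" using S1o by simp
  have S2m[measurable]: "S2 \<in> sets lborel" using S2o by simp
  have S1f: "emeasure lborel S1 < \<infinity>" unfolding S1_def by (intro emeasure_bounded_finite bounded_Times Do) auto
  have S2f: "emeasure lborel S2 < \<infinity>" unfolding S2_def by (intro emeasure_bounded_finite bounded_Times) auto
  have um[measurable]: "u \<in> borel_measurable lborel" using uX unfolding XD_def by simp
  have u2: "integrable lborel (\<lambda>p. indicator S1 p *\<^sub>R (cmod (u p))\<^sup>2)"
    using uX unfolding XD_def set_integrable_def S1_def by simp
  have \<phi>c: "continuous_on UNIV \<phi>" unfolding \<phi>_def by (intro continuous_intros)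
  have \<phi>m[measurable]: "\<phi> \<in> borel_measurable lborel"
    using borel_measurable_continuous_onI[OF \<phi>c] by simp
  have u1: "integrable lborel (\<lambda>p. indicator S1 p * u p)"
  proof (rule Bochner_Integration.integrable_bound[of _ "\<lambda>p. indicator S1 p + indicator S1 p *\<^sub>R (cmod (u p))\<^sup>2"])
    show "integrable lborel (\<lambda>p. indicator S1 p + indicator S1 p *\<^sub>R (cmod (u p))\<^sup>2 :: real)"
      using u2 S1f S1m by (intro Bochner_Integration.integrable_add integrable_real_indicator) auto
    show "(\<lambda>p. indicator S1 p * u p) \<in> borel_measurable lborel" by measurable
    show "AE p in lborel. norm (indicator S1 p * u p) \<le> norm (indicator S1 p + indicator S1 p *\<^sub>R (cmod (u p))\<^sup>2 :: real)"
    proof (intro AE_I2)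
      fix p
      have sq: "0 \<le> (cmod (u p) - 1) * (cmod (u p) - 1)" by simp
      have "cmod (u p) \<le> 1 + (cmod (u p))\<^sup>2"
        using sq norm_ge_zero[of "u p"] unfolding power2_eq_square by (simp only: ring_distribs)
      then show "norm (indicator S1 p * u p) \<le> norm (indicator S1 p + indicator S1 p *\<^sub>R (cmod (u p))\<^sup>2 :: real)"
        by (auto simp: indicator_def)
    qed
  qed
  have i2: "integrable lborel (\<lambda>p. indicator S2 p :: complex)"
  proof -
    have "integrable lborel (\<lambda>p. complex_of_real (indicator S2 p))"
      using S2f S2m by (intro integrable_of_real integrable_real_indicator) auto
    moreover have "complex_of_real (indicator S2 p) = indicator S2 p" for p by (simp add: indicator_def)
    ultimately show ?thesis by simp
  qed
  have gi: "integrable lborel g" unfolding g_def using u1 i2 by (intro Bochner_Integration.integrable_diff integrable_mult_right)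
  obtain Bn where Bn: "Bn \<ge> 0" "\<And>z. z \<in> D \<Longrightarrow> norm z \<le> Bn"
  proof -
    obtain B0 where "\<forall>z\<in>D. norm z \<le> B0" using Do(2) unfolding bounded_iff by blast
    then show ?thesis using that[of "max B0 0"] by force
  qed
  define Bd where "Bd = tmax + norm x + Bn + dist x y + \<epsilon>"
  have Bd0: "Bd \<ge> 0" unfolding Bd_def using Bn t \<epsilon> by simp
  have bd: "\<bar>\<phi> p\<bar> \<le> Bd" if "g p \<noteq> 0" for p
  proof -
    obtain z s where p: "p = (z, s)" by (cases p)
    have "p \<in> S1 \<or> p \<in> S2"
    proof (rule ccontr)
      assume "\<not> (p \<in> S1 \<or> p \<in> S2)"
      then have "g p = 0" unfolding g_def by simp
      then show False using that by simp
    qed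
    then show ?thesis
    proof
      assume "p \<in> S1"
      then have "z \<in> D" "tmin < s" "s < tmax" unfolding S1_def p by auto
      moreover have "dist x z \<le> norm x + norm z" by (simp add: dist_norm norm_triangle_ineq4)
      moreover have "0 \<le> dist x y" "0 \<le> dist x z" by simp_all
      ultimately have "s + dist x z \<le> Bd" "- (s + dist x z) \<le> Bd"
        using Bn(2)[of z] t \<epsilon> unfolding Bd_def by linarith+
      then show ?thesis unfolding \<phi>_def p by (simp add: abs_le_iff)
    next
      assume "p \<in> S2"
      then have "dist y z < \<epsilon>" "tmin < s" "s < \<eta>" unfolding S2_def p by auto
      moreover have "dist x z \<le> dist x y + dist y z" by (rule dist_triangle)
      moreover have "0 \<le> dist x y" "0 \<le> dist x z" "0 \<le> norm x" by simp_all
      ultimately have "s + dist x z \<le> Bd" "- (s + dist x z) \<le> Bd"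
        using Bn(1) t \<eta> \<epsilon> unfolding Bd_def greaterThanAtMost_iff by linarith+
      then show ?thesis unfolding \<phi>_def p by (simp add: abs_le_iff)
    qed
  qed
  define m where "m n = (\<integral>p. complex_of_real (\<phi> p ^ n) * g p \<partial>lborel)" for n
  define co where "co n = \<i>^n / fact n * m n" for n
  have exps: "(\<lambda>n. co n * w^n) sums (\<integral>p. exp (\<i> * (w * complex_of_real (\<phi> p))) * g p \<partial>lborel)" for w
  proof -
    have "(\<lambda>n. ((\<i> * w)^n / fact n) * m n) sums (\<integral>p. exp (\<i> * (w * complex_of_real (\<phi> p))) * g p \<partial>lborel)"
      unfolding m_def by (rule expansion[OF gi \<phi>m bd Bd0])
    moreover have "((\<i> * w)^n / fact n) * m n = co n * w^n" for n
      unfolding co_def by (simp add: power_mult_distrib)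
    ultimately show ?thesis by simp
  qed
  have Fk: "(\<integral>p. exp (\<i> * (complex_of_real k * complex_of_real (\<phi> p))) * g p \<partial>lborel)
      = LD D tmin tmax x u k - test_fn tmin x y \<eta> \<epsilon> k" for k
  proof -
    define E where "E p = exp (\<i> * complex_of_real (k * \<phi> p))" for p :: "pt \<times> real"
    have Em[measurable]: "E \<in> borel_measurable lborel" unfolding E_def by measurable
    have nE: "norm (E p) = 1" for p unfolding E_def by simp
    have e1: "integrable lborel (\<lambda>p. E p * (indicator S1 p * u p))"
      by (rule Bochner_Integration.integrable_bound[OF u1]) (auto simp: norm_mult nE)
    have e2: "integrable lborel (\<lambda>p. E p * indicator S2 p)"
      by (rule Bochner_Integration.integrable_bound[OF i2]) (auto simp: norm_mult nE)
    have "(\<integral>p. exp (\<i> * (complex_of_real k * complex_of_real (\<phi> p))) * g p \<partial>lborel)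
        = (\<integral>p. E p * (indicator S1 p * u p) - complex_of_real c * (E p * indicator S2 p) \<partial>lborel)"
      unfolding g_def E_def \<phi>_def by (intro Bochner_Integration.integral_cong refl) (simp add: algebra_simps)
    also have "\<dots> = (\<integral>p. E p * (indicator S1 p * u p) \<partial>lborel) - complex_of_real c * (\<integral>p. E p * indicator S2 p \<partial>lborel)"
      using e1 e2 by simp
    also have "(\<integral>p. E p * (indicator S1 p * u p) \<partial>lborel) = LD D tmin tmax x u k"
      unfolding LD_def set_lebesgue_integral_def S1_def E_def \<phi>_def
      by (intro Bochner_Integration.integral_cong refl) (simp add: indicator_def)
    also have "complex_of_real c * (\<integral>p. E p * indicator S2 p \<partial>lborel) = test_fn tmin x y \<eta> \<epsilon> k"
      unfolding test_fn_def set_lebesgue_integral_def S2_def E_def c_def \<phi>_def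
      by (intro arg_cong2[where f="(*)"] refl Bochner_Integration.integral_cong) (simp add: indicator_def)
    finally show ?thesis .
  qed
  have sm: "summable (\<lambda>n. co n * w^n)" for w using exps[of w] by (simp add: sums_iff)
  have ae2: "AE k in lborel. k \<in> {0<..<K} \<longrightarrow> (\<Sum>n. co n * complex_of_real k ^ n) = 0"
  proof (rule AE_mp[OF ae AE_I2], intro impI)
    fix k assume "k \<in> {0<..<K} \<longrightarrow> LD D tmin tmax x u k = test_fn tmin x y \<eta> \<epsilon> k" "k \<in> {0<..<K}"
    then have "LD D tmin tmax x u k = test_fn tmin x y \<eta> \<epsilon> k" by simp
    then show "(\<Sum>n. co n * complex_of_real k ^ n) = 0"
      using exps[of "complex_of_real k"] Fk[of k] by (simp add: sums_iff)
  qed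
  have co0: "co n = 0" for n by (rule powser_zero_coeffs[OF sm K ae2])
  have m0: "m n = 0" for n using co0[of n] unfolding co_def by simp
  have hint: "(\<integral>p. complex_of_real (h (\<phi> p)) * g p \<partial>lborel) = 0"
    by (rule moments_cont[OF gi \<phi>m bd m0[unfolded m_def] hc])
  have hz: "h (\<phi> p) * indicator S1 p = 0" for p
  proof (cases "p \<in> S1")
    case True
    then obtain z s where p: "p = (z, s)" "z \<in> D" "tmin < s" "s < tmax" unfolding S1_def by auto
    then show ?thesis using Da[OF p(2)] h0[of "\<phi> p"] unfolding \<phi>_def by simp
  qed simp
  have "(\<integral>p. complex_of_real (h (\<phi> p)) * g p \<partial>lborel) = (\<integral>p. complex_of_real (- c * (h (\<phi> p) * indicator S2 p)) \<partial>lborel)"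
  proof (intro Bochner_Integration.integral_cong refl)
    fix p
    have "complex_of_real (h (\<phi> p)) * (indicator S1 p * u p) = 0"
      using hz[of p] by (cases "p \<in> S1") (auto simp: indicator_def)
    then show "complex_of_real (h (\<phi> p)) * g p = complex_of_real (- c * (h (\<phi> p) * indicator S2 p))"
      unfolding g_def by (simp add: algebra_simps indicator_def)
  qed
  then have "complex_of_real (\<integral>p. - c * (h (\<phi> p) * indicator S2 p) \<partial>lborel) = 0"
    using hint by (simp only: integral_complex_of_real)
  then have "(\<integral>p. - c * (h (\<phi> p) * indicator S2 p) \<partial>lborel) = 0" by (simp only: of_real_eq_0_iff)
  then have "- c * (\<integral>p. h (\<phi> p) * indicator S2 p \<partial>lborel) = 0" by (simp only: integral_mult_right_zero)
  moreover have c0: "c > 0" unfolding c_def using \<eta> content_ball_pos[OF \<epsilon>, of y] by simp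
  ultimately have int0: "(\<integral>p. h (\<phi> p) * indicator S2 p \<partial>lborel) = 0" by simp
  have hm[measurable]: "h \<in> borel_measurable borel" using hc borel_measurable_continuous_onI by blast
  have hi: "integrable lborel (\<lambda>p. h (\<phi> p) * indicator S2 p)"
  proof (rule Bochner_Integration.integrable_bound[of _ "indicator S2 :: _ \<Rightarrow> real"])
    show "integrable lborel (indicator S2 :: _ \<Rightarrow> real)" using S2m S2f by (rule integrable_real_indicator)
    show "(\<lambda>p. h (\<phi> p) * indicator S2 p) \<in> borel_measurable lborel" by measurable
    show "AE p in lborel. norm (h (\<phi> p) * indicator S2 p) \<le> norm (indicator S2 p :: real)"
    proof (intro AE_I2)
      fix p
      have "0 \<le> h (\<phi> p)" "h (\<phi> p) \<le> 1" using h01 by auto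
      then show "norm (h (\<phi> p) * indicator S2 p) \<le> norm (indicator S2 p :: real)"
        by (auto simp: indicator_def)
    qed
  qed
  have aeh: "AE p in lborel. h (\<phi> p) * indicator S2 p = 0"
    using int0 integral_nonneg_eq_0_iff_AE[OF hi] h01 by simp
  define U where "U = S2 \<inter> {p. 0 < h (\<phi> p)}"
  have Uo: "open U" unfolding U_def
    by (intro open_Int S2o open_Collect_less continuous_intros continuous_on_compose2[OF hc \<phi>c]) auto
  have p0: "(y, t0) \<in> U" unfolding U_def S2_def \<phi>_def using t0 hp \<epsilon> by auto
  have "AE p in lborel. p \<notin> U"
    by (rule AE_mp[OF aeh AE_I2]) (auto simp: U_def indicator_def)
  then obtain N where N: "{p \<in> space lborel. \<not> p \<notin> U} \<subseteq> N" "emeasure lborel N = 0" "N \<in> sets lborel"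
    by (rule AE_E)
  have "emeasure lborel U \<le> emeasure lborel N" using N by (intro emeasure_mono) auto
  then show False using N(2) open_emeasure_pos[OF Uo p0] by simp
qed


theorem mainTheorem9:
  fixes D :: "(real^3) set" and R tmin tmax kmin kmax :: real and x :: "real^3"
  assumes "lipschitz_domain D"
    and "connected (- closure D)"
    and "D \<subseteq> ball 0 R"
    and "0 \<le> tmin" and "tmin < tmax"
    and "0 \<le> kmin" and "kmin < kmax"
    and "norm x = R"
  shows "(\<forall>y \<in> annulus_D D x. \<exists>\<epsilon>0>0. \<forall>\<epsilon>\<in>{0<..<\<epsilon>0}. \<forall>\<eta>\<in>{tmin<..tmax}.
            in_range_LD D tmin tmax ((kmax - kmin) / 2) x (test_fn tmin x y \<eta> \<epsilon>))
       \<and> (\<forall>\<eta>\<in>{tmin<..tmax}. \<forall>y. y \<notin> closure (annulus_D_eta D tmax \<eta> x) \<longrightarrow>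
            (\<forall>\<epsilon>>0. \<not> in_range_LD D tmin tmax ((kmax - kmin) / 2) x (test_fn tmin x y \<eta> \<epsilon>)))"
proof -
  have L: "open D" "bounded D" "connected D" "D \<noteq> {}"
    using assms(1) unfolding lipschitz_domain_def by blast+
  have K: "(kmax - kmin) / 2 > 0" using assms(7) by simp
  show ?thesis
  proof (intro conjI ballI allI impI)
    fix y assume "y \<in> annulus_D D x"
    then show "\<exists>\<epsilon>0>0. \<forall>\<epsilon>\<in>{0<..<\<epsilon>0}. \<forall>\<eta>\<in>{tmin<..tmax}.
            in_range_LD D tmin tmax ((kmax - kmin) / 2) x (test_fn tmin x y \<eta> \<epsilon>)"
      by (intro part_i L)
  next
    fix \<eta> \<epsilon> :: real and y :: pt
    show "\<not> in_range_LD D tmin tmax ((kmax - kmin) / 2) x (test_fn tmin x y \<eta> \<epsilon>)"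
      if "\<eta> \<in> {tmin<..tmax}" "y \<notin> closure (annulus_D_eta D tmax \<eta> x)" "\<epsilon> > 0"
      by (rule part_ii[OF L(1,2,4) assms(4,5) that K])
  qed
qed

end
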